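(* Let $\mathbf{k}$ be a commutative unital ring, $R$ a $\mathbf{k}$-algebra, $\lambda,\kappa\in\mathbf{k}$, and $P$ an extended Rota-Baxter operator of weight $(\lambda,\kappa)$ on $R$. Let $\tilde P:=-\lambda\,\mathrm{id}_R-P$. (1) For all $u,v\in R$, $$P(u)\tilde P(v)=P(u\tilde P(v))+\tilde P(P(u)v)-\kappa uv,\qquad \tilde P(u)P(v)=\tilde P(uP(v))+P(\tilde P(u)v)-\kappa uv.$$ (2) For all $a,b\in\mathbf{k}$, the operator $Q:=aP+b\tilde P$ is an extended Rota-Baxter operator of weight $\big(\lambda(a+b),\ ab\lambda^2+(a-b)^2\kappa\big)$.
   Context: For $\lambda,\kappa\in\mathbf{k}$, an extended Rota-Baxter operator of weight $(\lambda,\kappa)$ on a $\mathbf{k}$-algebra $R$ is a $\mathbf{k}$-linear map $P:R\to R$ such that $P(x)P(y)=P(xP(y))+P(P(x)y)+\lambda P(xy)+\kappa xy$ for all $x,y\in R$. *)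

theory Defs
  imports Main
begin

definition k_algebra :: "('k::comm_ring_1 \<Rightarrow> 'r::ring \<Rightarrow> 'r) \<Rightarrow> bool" where
  "k_algebra sm \<longleftrightarrow>
     (\<forall>a x y. sm a (x + y) = sm a x + sm a y) \<and>
     (\<forall>a b x. sm (a + b) x = sm a x + sm b x) \<and>
     (\<forall>a b x. sm (a * b) x = sm a (sm b x)) \<and>
     (\<forall>x. sm 1 x = x) \<and>
     (\<forall>a x y. sm a (x * y) = sm a x * y) \<and>
     (\<forall>a x y. sm a (x * y) = x * sm a y)"

definition k_linear :: "('k::comm_ring_1 \<Rightarrow> 'r::ring \<Rightarrow> 'r) \<Rightarrow> ('r \<Rightarrow> 'r) \<Rightarrow> bool" where
  "k_linear sm P \<longleftrightarrow> (\<forall>x y. P (x + y) = P x + P y) \<and> (\<forall>a x. P (sm a x) = sm a (P x))"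

definition ext_RB :: "('k::comm_ring_1 \<Rightarrow> 'r::ring \<Rightarrow> 'r) \<Rightarrow> 'k \<Rightarrow> 'k \<Rightarrow> ('r \<Rightarrow> 'r) \<Rightarrow> bool" where
  "ext_RB sm lam kap P \<longleftrightarrow> k_linear sm P \<and>
     (\<forall>x y. P x * P y = P (x * P y) + P (P x * y) + sm lam (P (x * y)) + sm kap (x * y))"

definition rb_tilde :: "('k::comm_ring_1 \<Rightarrow> 'r::ring \<Rightarrow> 'r) \<Rightarrow> 'k \<Rightarrow> ('r \<Rightarrow> 'r) \<Rightarrow> 'r \<Rightarrow> 'r" where
  "rb_tilde sm lam P x = - sm lam x - P x"

end

theory Submission
  imports Defs
begin

context
  fixes sm :: "'k::comm_ring_1 \<Rightarrow> 'r::ring \<Rightarrow> 'r"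
  assumes A: "k_algebra sm"
begin

lemma sm_add: "sm a (x + y) = sm a x + sm a y" using A by (simp add: k_algebra_def)
lemma sm_addk: "sm (a + b) x = sm a x + sm b x" using A by (simp add: k_algebra_def)
lemma sm_mult: "sm a (sm b x) = sm (a * b) x" using A by (simp add: k_algebra_def)
lemma sm_one: "sm 1 x = x" using A by (simp add: k_algebra_def)
lemma sm_l: "sm a x * y = sm a (x * y)" using A by (simp add: k_algebra_def)
lemma sm_r: "x * sm a y = sm a (x * y)" using A unfolding k_algebra_def by metis
lemma sm_0: "sm a 0 = 0" using sm_add[of a 0 0] by simp
lemma sm_0k: "sm 0 x = 0" using sm_addk[of 0 0 x] by simp
lemma sm_neg: "sm a (- x) = - sm a x"
  using sm_add[of a x "-x"] sm_0 by (simp add: add_eq_0_iff)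
lemma sm_negk: "sm (- a) x = - sm a x"
  using sm_addk[of a "-a" x] sm_0k by (simp add: add_eq_0_iff)
lemma sm_diff: "sm a (x - y) = sm a x - sm a y"
  using sm_add[of a x "-y"] sm_neg by simp
lemma sm_diffk: "sm (a - b) x = sm a x - sm b x"
  using sm_addk[of a "-b" x] sm_negk by simp

lemmas smS = sm_add sm_addk sm_mult sm_one sm_l sm_r sm_0 sm_0k sm_neg sm_negk sm_diff sm_diffk

end

lemma lin:
  assumes "k_linear sm P"
  shows "P (x + y) = P x + P y" "P (sm a x) = sm a (P x)" "P 0 = 0" "P (- x) = - P x"
        "P (x - y) = P x - P y"
proof -
  have a: "\<And>x y. P (x + y) = P x + P y" using assms by (simp add: k_linear_def)
  show "P (x + y) = P x + P y" "P (sm a x) = sm a (P x)" using assms by (auto simp: k_linear_def)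
  show z: "P 0 = 0" using a[of 0 0] by simp
  show n: "P (- x) = - P x" using a[of x "-x"] z by (simp add: add_eq_0_iff)
  show "P (x - y) = P x - P y" using a[of x "-y"] a[of y "-y"] z by (simp add: add_eq_0_iff)
qed

theorem corollary2p5:
  fixes sm :: "'k::comm_ring_1 \<Rightarrow> 'r::ring \<Rightarrow> 'r"
    and lam kap :: 'k and P :: "'r \<Rightarrow> 'r"
  assumes "k_algebra sm"
    and "ext_RB sm lam kap P"
  shows "(\<forall>u v. P u * rb_tilde sm lam P v
            = P (u * rb_tilde sm lam P v) + rb_tilde sm lam P (P u * v) - sm kap (u * v))
       \<and> (\<forall>u v. rb_tilde sm lam P u * P v
            = rb_tilde sm lam P (u * P v) + P (rb_tilde sm lam P u * v) - sm kap (u * v))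
       \<and> (\<forall>a b. ext_RB sm (lam * (a + b)) (a * b * lam ^ 2 + (a - b) ^ 2 * kap)
                 (\<lambda>x. sm a (P x) + sm b (rb_tilde sm lam P x)))"
proof -
  note S = smS[OF assms(1)]
  have L: "k_linear sm P" and RB: "\<And>x y. P x * P y = P (x * P y) + P (P x * y) + sm lam (P (x * y)) + sm kap (x * y)"
    using assms(2) by (auto simp: ext_RB_def)
  note PL = lin[OF L]
  have 1: "P u * rb_tilde sm lam P v
            = P (u * rb_tilde sm lam P v) + rb_tilde sm lam P (P u * v) - sm kap (u * v)" for u v
    unfolding rb_tilde_def using RB[of u v] by (simp add: S PL algebra_simps)
  have 2: "rb_tilde sm lam P u * P v
            = rb_tilde sm lam P (u * P v) + P (rb_tilde sm lam P u * v) - sm kap (u * v)" for u v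
    unfolding rb_tilde_def using RB[of u v] by (simp add: S PL algebra_simps)
  have 3: "ext_RB sm (lam * (a + b)) (a * b * lam ^ 2 + (a - b) ^ 2 * kap)
                 (\<lambda>x. sm a (P x) + sm b (rb_tilde sm lam P x))" for a b
  proof -
    define c d where "c = a - b" and "d = b * lam"
    define Q where "Q = (\<lambda>x. sm a (P x) + sm b (rb_tilde sm lam P x))"
    have Qe: "Q x = sm c (P x) - sm d x" for x
      unfolding Q_def rb_tilde_def c_def d_def by (simp add: S algebra_simps)
    have QL: "k_linear sm Q" unfolding k_linear_def Qe
      by (simp add: S PL algebra_simps mult.commute)
    have "Q x * Q y = Q (x * Q y) + Q (Q x * y) + sm (lam * (a + b)) (Q (x * y))
         + sm (a * b * lam ^ 2 + (a - b) ^ 2 * kap) (x * y)" for x y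
    proof -
      have "Q x * Q y = sm (c*c) (P x * P y) - sm (c*d) (P x * y) - sm (c*d) (x * P y) + sm (d*d) (x*y)"
        unfolding Qe by (simp add: S algebra_simps mult.commute)
      also have "\<dots> = sm (c*c) (P (x * P y)) + sm (c*c) (P (P x * y)) + sm (c*c*lam) (P (x*y))
           + sm (c*c*kap + d*d) (x*y) - sm (c*d) (P x * y) - sm (c*d) (x * P y)"
        unfolding RB by (simp add: S algebra_simps mult.commute)
      also have "\<dots> = Q (x * Q y) + Q (Q x * y) + sm (lam * (a + b)) (Q (x * y))
         + sm (a * b * lam ^ 2 + (a - b) ^ 2 * kap) (x * y)"
      proof -
        have p1: "Q (x * Q y) = sm (c*c) (P (x * P y)) - sm (c*d) (P (x*y)) - sm (c*d) (x * P y) + sm (d*d) (x*y)"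
          unfolding Qe by (simp add: S PL algebra_simps mult.commute)
        have p2: "Q (Q x * y) = sm (c*c) (P (P x * y)) - sm (c*d) (P (x*y)) - sm (c*d) (P x * y) + sm (d*d) (x*y)"
          unfolding Qe by (simp add: S PL algebra_simps mult.commute)
        have p3: "sm (lam * (a + b)) (Q (x * y)) = sm (lam*(a+b)*c) (P (x*y)) - sm (lam*(a+b)*d) (x*y)"
          unfolding Qe by (simp add: S PL mult.commute)
        have k1: "c*c*lam = lam*(a+b)*c - c*d - c*d" unfolding c_def d_def by (simp add: algebra_simps)
        have k2: "c*c*kap + d*d = d*d + d*d - lam*(a+b)*d + (a*b*lam^2 + (a-b)^2*kap)"
          unfolding c_def d_def by (simp add: algebra_simps power2_eq_square)
        show ?thesis unfolding p1 p2 p3 k1 k2 by (simp only: S) (simp add: algebra_simps)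
      qed
      finally show ?thesis .
    qed
    then show ?thesis using QL unfolding ext_RB_def Q_def by simp
  qed
  show ?thesis using 1 2 3 by blast
qed

end
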